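(* Let $k,s,b_1,b_2\in\mathbb{R}$ and $\eta>0$. If there is a constant $C$ such that $$\|u_1\overline{u_2}\|_{H^{-1/2+\eta}_tH^s_x}\le C\|u_1\|_{X^{k,b_1}_{per}}\|u_2\|_{X^{k,b_2}_{per}}$$ for all (smooth, rapidly decaying in $t$) functions $u_1,u_2$ on $\mathbb{T}_x\times\mathbb{R}_t$, then $s\le 2k$ and $s<k+1$.
   Context: $\widehat f(n,\tau)$ is the Fourier transform (Fourier coefficients in $x\in\mathbb{T}$, Fourier transform in $t$); $\langle x\rangle=1+|x|$. $\|f\|_{X^{s,b}_{per}}=\big(\sum_{n\in\mathbb{Z}}\int\langle n\rangle^{2s}\langle\tau+n^2\rangle^{2b}|\widehat f(n,\tau)|^2d\tau\big)^{1/2}$, $\|f\|_{H^b_tH^s_x}=\big(\sum_n\int\langle n\rangle^{2s}\langle\tau\rangle^{2b}|\widehat f(n,\tau)|^2d\tau\big)^{1/2}$. (The paper's exponent $-1/2+$ is interpreted as $-1/2+\eta$.) *)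

theory Defs
  imports "HOL-Analysis.Analysis"
begin

text \<open>Functions on T_x x R_t are represented as u :: real \<Rightarrow> real \<Rightarrow> complex, u x t,
  2pi-periodic in x.\<close>

definition test_fun :: "(real \<Rightarrow> real \<Rightarrow> complex) \<Rightarrow> bool" where
  "test_fun u \<longleftrightarrow>
     (\<forall>x t. u (x + 2 * pi) t = u x t) \<and>
     (\<exists>D :: nat \<Rightarrow> nat \<Rightarrow> real \<Rightarrow> real \<Rightarrow> complex.
        D 0 0 = u \<and>
        (\<forall>i j x t. ((\<lambda>y. D i j y t) has_vector_derivative D (Suc i) j x t) (at x)) \<and>
        (\<forall>i j x t. ((\<lambda>y. D i j x y) has_vector_derivative D i (Suc j) x t) (at t)) \<and>
        (\<forall>i j. continuous_on UNIV (\<lambda>p. D i j (fst p) (snd p))) \<and>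
        (\<forall>i j (N::nat). \<exists>B. \<forall>x t. (1 + \<bar>t\<bar>) ^ N * norm (D i j x t) \<le> B))"

definition fourier :: "(real \<Rightarrow> real \<Rightarrow> complex) \<Rightarrow> int \<Rightarrow> real \<Rightarrow> complex" where
  "fourier u n \<tau> = integral {0..2*pi} (\<lambda>x. integral UNIV
       (\<lambda>t. u x t * exp (- \<i> * complex_of_real (real_of_int n * x + \<tau> * t))))"

definition jbr :: "real \<Rightarrow> real" where
  "jbr x = 1 + \<bar>x\<bar>"

definition Xnorm :: "real \<Rightarrow> real \<Rightarrow> (real \<Rightarrow> real \<Rightarrow> complex) \<Rightarrow> real" where
  "Xnorm s b u = sqrt (infsum (\<lambda>n::int. integral UNIV (\<lambda>\<tau>.
      jbr (real_of_int n) powr (2 * s) * jbr (\<tau> + (real_of_int n)^2) powr (2 * b)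
        * (cmod (fourier u n \<tau>))^2)) UNIV)"

definition HHnorm :: "real \<Rightarrow> real \<Rightarrow> (real \<Rightarrow> real \<Rightarrow> complex) \<Rightarrow> real" where
  "HHnorm b s u = sqrt (infsum (\<lambda>n::int. integral UNIV (\<lambda>\<tau>.
      jbr (real_of_int n) powr (2 * s) * jbr \<tau> powr (2 * b) * (cmod (fourier u n \<tau>))^2)) UNIV)"

end

theory Submission
  imports Defs "HOL-Probability.Probability" "HOL-Computational_Algebra.Polynomial" "HOL-Real_Asymp.Real_Asymp"
begin

lemma has_integral_shift_UNIV:
  fixes f :: "real \<Rightarrow> 'b::banach"
  assumes "(f has_integral I) UNIV"
  shows "((\<lambda>x. f (x + c)) has_integral I) UNIV"
proof -
  have h1: "\<And>a b. f integrable_on cbox a b"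
   and h2: "\<And>e. e > 0 \<Longrightarrow> \<exists>B>0. \<forall>a b. ball 0 B \<subseteq> cbox a b \<longrightarrow> norm (integral (cbox a b) f - I) < e"
    using assms[unfolded has_integral_alt'] by auto
  show ?thesis unfolding has_integral_alt'
  proof (intro conjI allI impI)
    fix a b :: real
    show "(\<lambda>x. if x \<in> UNIV then f (x + c) else 0) integrable_on cbox a b"
      using integrable_shift_cbox[OF h1[of "a+c" "b+c"], of c] by simp
  next
    fix e :: real assume "e > 0"
    then obtain B where B: "B > 0" "\<And>a b. ball 0 B \<subseteq> cbox a b \<Longrightarrow> norm (integral (cbox a b) f - I) < e"
      using h2 by blast
    show "\<exists>B>0. \<forall>a b. ball 0 B \<subseteq> cbox a b \<longrightarrow>
            norm (integral (cbox a b) (\<lambda>x. if x \<in> UNIV then f (x + c) else 0) - I) < e"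
    proof (intro exI[of _ "B + \<bar>c\<bar>"] conjI allI impI)
      show "B + \<bar>c\<bar> > 0" using B by simp
      fix a b :: real assume sub: "ball 0 (B + \<bar>c\<bar>) \<subseteq> cbox a b"
      have "ball 0 B \<subseteq> cbox (a + c) (b + c)"
      proof
        fix y assume "y \<in> ball (0::real) B"
        then have "y - c \<in> ball 0 (B + \<bar>c\<bar>)" by (auto simp: dist_real_def)
        then have "y - c \<in> cbox a b" using sub by blast
        then show "y \<in> cbox (a + c) (b + c)" by auto
      qed
      then have "norm (integral (cbox (a+c) (b+c)) f - I) < e" using B by blast
      moreover have "integral (cbox a b) (\<lambda>x. f (x + c)) = integral (cbox (a+c) (b+c)) f"
        using integral_shift_cbox[of "a+c" c "b+c" f] by simp
      ultimately show "norm (integral (cbox a b) (\<lambda>x. if x \<in> UNIV then f (x + c) else 0) - I) < e"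
        by simp
    qed
  qed
qed

lemma integral_shift_UNIV:
  fixes f :: "real \<Rightarrow> 'b::banach"
  shows "integral UNIV (\<lambda>x. f (x + c)) = integral UNIV f"
proof (cases "f integrable_on UNIV")
  case True
  then show ?thesis using has_integral_shift_UNIV[of f "integral UNIV f" c]
    by (simp add: integrable_integral integral_unique)
next
  case False
  have "\<not> (\<lambda>x. f (x + c)) integrable_on UNIV"
  proof
    assume "(\<lambda>x. f (x + c)) integrable_on UNIV"
    then obtain J where "((\<lambda>x. f (x + c)) has_integral J) UNIV" by auto
    from has_integral_shift_UNIV[OF this, of "-c"] have "f integrable_on UNIV" by auto
    with False show False by simp
  qed
  with False show ?thesis by (simp add: not_integrable_integral)
qed


lemma vd_of_real:
  assumes "\<And>z. (g has_field_derivative g' z) (at z)"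
  shows "((\<lambda>x::real. g (of_real x)) has_vector_derivative g' (of_real x)) (at x within s)"
  by (rule has_vector_derivative_real_field[OF assms])

lemma integral_exp_circle:
  fixes m :: int
  shows "integral {0..2*pi} (\<lambda>x. exp (\<i> * complex_of_real (real_of_int m * x))) = (if m = 0 then 2*pi else 0)"
proof (cases "m = 0")
  case True then show ?thesis by (simp add: scaleR_conv_of_real)
next
  case False
  let ?g = "\<lambda>z::complex. exp (\<i> * of_int m * z) / (\<i> * of_int m)"
  have gd: "(?g has_field_derivative exp (\<i> * of_int m * z)) (at z)" for z
    using False by (auto intro!: derivative_eq_intros simp: field_simps)
  have e: "exp (\<i> * complex_of_real (real_of_int m * x)) = exp (\<i> * of_int m * of_real x)" for x
    by (simp add: algebra_simps)
  let ?F = "\<lambda>x::real. ?g (of_real x)"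
  have d: "(?F has_vector_derivative exp (\<i> * complex_of_real (real_of_int m * x))) (at x within {0..2*pi})" for x
    unfolding e by (rule vd_of_real[OF gd])
  have "((\<lambda>x. exp (\<i> * complex_of_real (real_of_int m * x))) has_integral ?F (2*pi) - ?F 0) {0..2*pi}"
    by (rule fundamental_theorem_of_calculus) (use d in auto)
  moreover have "?F (2*pi) = ?F 0"
  proof -
    have "exp (\<i> * of_int m * of_real (2*pi)) = exp ((2 * of_int m * of_real pi) * \<i>)"
      by (simp add: algebra_simps)
    also have "\<dots> = 1" using exp_integer_2pi[of "of_int m"] by simp
    finally show ?thesis by simp
  qed
  ultimately show ?thesis using False by (simp add: integral_unique)
qed

definition FT :: "(real \<Rightarrow> complex) \<Rightarrow> real \<Rightarrow> complex" where
  "FT f \<tau> = integral UNIV (\<lambda>t. f t * exp (- \<i> * complex_of_real (\<tau> * t)))"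

lemma fourier_sep:
  fixes N :: int
  shows "fourier (\<lambda>x t. exp (\<i> * complex_of_real (real_of_int N * x)) * f t) n \<tau>
     = (if n = N then 2 * pi * FT f \<tau> else 0)"
proof -
  have e: "exp (\<i> * complex_of_real (real_of_int N * x)) * f t *
        exp (- \<i> * complex_of_real (real_of_int n * x + \<tau> * t))
      = exp (\<i> * complex_of_real (real_of_int (N - n) * x)) * (f t * exp (- \<i> * complex_of_real (\<tau> * t)))" for x t
  proof -
    have "exp (- \<i> * complex_of_real (real_of_int n * x + \<tau> * t)) =
      exp (- \<i> * complex_of_real (real_of_int n * x)) * exp (- \<i> * complex_of_real (\<tau> * t))"
      by (simp add: exp_add[symmetric] algebra_simps)
    moreover have "exp (\<i> * complex_of_real (real_of_int N * x)) * exp (- \<i> * complex_of_real (real_of_int n * x))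
       = exp (\<i> * complex_of_real (real_of_int (N - n) * x))"
      by (simp add: exp_add[symmetric] algebra_simps)
    ultimately show ?thesis by (simp add: algebra_simps)
  qed
  have "fourier (\<lambda>x t. exp (\<i> * complex_of_real (real_of_int N * x)) * f t) n \<tau>
     = integral {0..2*pi} (\<lambda>x. exp (\<i> * complex_of_real (real_of_int (N - n) * x)) * FT f \<tau>)"
    unfolding fourier_def e FT_def by simp
  also have "\<dots> = integral {0..2*pi} (\<lambda>x. exp (\<i> * complex_of_real (real_of_int (N - n) * x))) * FT f \<tau>"
    by simp
  also have "\<dots> = (if n = N then 2 * pi * FT f \<tau> else 0)"
    using integral_exp_circle[of "N - n"] by (auto simp: scaleR_conv_of_real)
  finally show ?thesis .
qed


lemma gauss_has_integral:
  "((\<lambda>t. complex_of_real (exp (- (t^2) / 2)) * exp (- \<i> * complex_of_real (\<sigma> * t)))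
     has_integral (complex_of_real (sqrt (2*pi) * exp (- (\<sigma>^2) / 2)))) UNIV"
proof -
  interpret P: prob_space std_normal_distribution
    using real_dist_normal_dist by (simp add: real_distribution_def)
  have i1: "integrable std_normal_distribution (\<lambda>x. exp (\<i> * complex_of_real (- \<sigma> * x)))"
    by (rule P.integrable_iexp) auto
  have i2: "integrable lborel (\<lambda>x. std_normal_density x *\<^sub>R exp (\<i> * complex_of_real (- \<sigma> * x)))"
    using i1 by (subst (asm) integrable_density) (auto simp: normal_density_nonneg)
  have v: "integral\<^sup>L lborel (\<lambda>x. std_normal_density x *\<^sub>R exp (\<i> * complex_of_real (- \<sigma> * x)))
      = complex_of_real (exp (- (\<sigma>^2) / 2))"
  proof -
    have "integral\<^sup>L lborel (\<lambda>x. std_normal_density x *\<^sub>R exp (\<i> * complex_of_real (- \<sigma> * x)))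
        = char std_normal_distribution (- \<sigma>)"
      unfolding char_def by (subst integral_density) (auto simp: normal_density_nonneg)
    then show ?thesis by (simp add: char_std_normal_distribution)
  qed
  have h: "((\<lambda>x. std_normal_density x *\<^sub>R exp (\<i> * complex_of_real (- \<sigma> * x))) has_integral
      complex_of_real (exp (- (\<sigma>^2) / 2))) UNIV"
    using has_integral_integral_lborel[OF i2] v by simp
  note h2 = has_integral_mult_right[OF h, of "complex_of_real (sqrt (2*pi))"]
  have fe: "complex_of_real (sqrt (2*pi)) * (std_normal_density x *\<^sub>R exp (\<i> * complex_of_real (- \<sigma> * x)))
     = complex_of_real (exp (- (x^2) / 2)) * exp (- \<i> * complex_of_real (\<sigma> * x))" for x
    by (simp add: std_normal_density_def scaleR_conv_of_real)
  have ve: "complex_of_real (sqrt (2*pi)) * complex_of_real (exp (- (\<sigma>^2) / 2)) = complex_of_real (sqrt (2*pi) * exp (- (\<sigma>^2) / 2))"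
    by simp
  show ?thesis using h2 unfolding fe ve .
qed


lemma poly_growth:
  fixes p :: "complex poly"
  shows "\<exists>K d. K \<ge> 0 \<and> (\<forall>t::real. norm (poly p (complex_of_real t)) \<le> K * (1 + \<bar>t\<bar>) ^ d)"
proof (induction p)
  case 0
  show ?case by (intro exI[of _ 0]) auto
next
  case (pCons a p)
  then obtain K d where K: "K \<ge> 0" "\<And>t::real. norm (poly p (complex_of_real t)) \<le> K * (1 + \<bar>t\<bar>) ^ d"
    by blast
  show ?case
  proof (intro exI[of _ "norm a + K"] exI[of _ "Suc d"] conjI allI)
    show "norm a + K \<ge> 0" using K by simp
    fix t :: real
    have p1: "1 \<le> (1 + \<bar>t\<bar>) ^ Suc d" by (rule one_le_power) simp
    have "norm (poly (pCons a p) (complex_of_real t)) \<le> norm a + \<bar>t\<bar> * norm (poly p (complex_of_real t))"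
      by (simp add: norm_triangle_le norm_mult)
    also have "\<dots> \<le> norm a + \<bar>t\<bar> * (K * (1 + \<bar>t\<bar>) ^ d)"
      using K(2)[of t] by (simp add: mult_left_mono)
    also have "\<bar>t\<bar> * (K * (1 + \<bar>t\<bar>) ^ d) \<le> K * (1 + \<bar>t\<bar>) ^ Suc d"
      using K(1) by (simp add: mult_right_mono mult_left_mono algebra_simps)
    then have "norm a + \<bar>t\<bar> * (K * (1 + \<bar>t\<bar>) ^ d) \<le> norm a * (1 + \<bar>t\<bar>) ^ Suc d + K * (1 + \<bar>t\<bar>) ^ Suc d"
      using mult_left_mono[OF p1, of "norm a"] by simp
    finally show "norm (poly (pCons a p) (complex_of_real t)) \<le> (norm a + K) * (1 + \<bar>t\<bar>) ^ Suc d"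
      by (simp add: algebra_simps)
  qed
qed

lemma gauss_decay:
  fixes t :: real
  shows "(1 + \<bar>t\<bar>) ^ m * exp (- (t^2) / 4) \<le> exp ((real m + 1)^2)"
proof -
  have "(1 + \<bar>t\<bar>) ^ m \<le> (1 + \<bar>t\<bar>) ^ Suc m" by (rule power_increasing) auto
  also have "(1 + \<bar>t\<bar>) ^ Suc m = (1 + ((real m + 1) * \<bar>t\<bar>) / real (Suc m)) ^ Suc m"
  proof -
    have "((real m + 1) * \<bar>t\<bar>) / real (Suc m) = \<bar>t\<bar>" by (simp add: field_simps)
    then show ?thesis by simp
  qed
  also have "\<dots> \<le> exp ((real m + 1) * \<bar>t\<bar>)"
  proof (rule exp_ge_one_plus_x_over_n_power_n)
    have "0 \<le> (real m + 1) * \<bar>t\<bar>" by simp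
    then show "- real (Suc m) \<le> (real m + 1) * \<bar>t\<bar>" by linarith
  qed simp
  finally have a: "(1 + \<bar>t\<bar>) ^ m \<le> exp ((real m + 1) * \<bar>t\<bar>)" .
  have "(1 + \<bar>t\<bar>) ^ m * exp (- (t^2) / 4) \<le> exp ((real m + 1) * \<bar>t\<bar>) * exp (- (t^2) / 4)"
    using a by (simp add: mult_right_mono)
  also have "\<dots> = exp ((real m + 1) * \<bar>t\<bar> - (t^2) / 4)" by (simp add: exp_add[symmetric])
  also have "\<dots> \<le> exp ((real m + 1)^2)"
  proof -
    have "0 \<le> (\<bar>t\<bar> / 2 - (real m + 1))^2" by simp
    then have "(real m + 1) * \<bar>t\<bar> - (t^2) / 4 \<le> (real m + 1)^2"
      by (simp add: power2_eq_square algebra_simps)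
    then show ?thesis by simp
  qed
  finally show ?thesis .
qed


definition Qp :: "real \<Rightarrow> complex poly" where
  "Qp \<omega> = [:0, - \<i> * of_real \<omega>, - 1/4:]"

fun Pp :: "real \<Rightarrow> nat \<Rightarrow> complex poly" where
  "Pp \<omega> 0 = 1"
| "Pp \<omega> (Suc j) = pderiv (Pp \<omega> j) + pderiv (Qp \<omega>) * Pp \<omega> j"

definition ufun :: "int \<Rightarrow> real \<Rightarrow> real \<Rightarrow> real \<Rightarrow> complex" where
  "ufun N \<omega> x t = exp (\<i> * of_int N * of_real x) * exp (poly (Qp \<omega>) (of_real t))"

definition Dfun :: "int \<Rightarrow> real \<Rightarrow> nat \<Rightarrow> nat \<Rightarrow> real \<Rightarrow> real \<Rightarrow> complex" where
  "Dfun N \<omega> i j x t = (\<i> * of_int N)^i * exp (\<i> * of_int N * of_real x) *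
      (poly (Pp \<omega> j) (of_real t) * exp (poly (Qp \<omega>) (of_real t)))"

lemma poly_Qp: "poly (Qp \<omega>) (complex_of_real t) = - \<i> * complex_of_real (\<omega> * t) - complex_of_real (t^2 / 4)"
  by (simp add: Qp_def algebra_simps power2_eq_square)

lemma norm_exp_Qp: "norm (exp (poly (Qp \<omega>) (complex_of_real t))) = exp (- (t^2) / 4)"
  by (simp add: poly_Qp)

lemma norm_exp_iN: "norm (exp (\<i> * of_int N * complex_of_real x)) = 1"
  by (simp add: norm_exp_eq_Re)

lemma test_fun_ufun: "test_fun (ufun N \<omega>)"
  unfolding test_fun_def
proof (intro conjI exI[of _ "Dfun N \<omega>"] allI)
  fix x t :: real
  have "exp (\<i> * of_int N * complex_of_real (x + 2 * pi)) = exp (\<i> * of_int N * complex_of_real x) * exp ((2 * of_int N * of_real pi) * \<i>)"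
    by (simp add: exp_add[symmetric] algebra_simps)
  also have "exp ((2 * of_int N * of_real pi) * \<i>) = 1"
    using exp_integer_2pi[of "of_int N"] by simp
  finally show "ufun N \<omega> (x + 2 * pi) t = ufun N \<omega> x t" by (simp add: ufun_def)
next
  show "Dfun N \<omega> 0 0 = ufun N \<omega>" by (auto simp: Dfun_def ufun_def fun_eq_iff)
next
  fix i j :: nat and x t :: real
  let ?g = "\<lambda>z. (\<i> * of_int N)^i * exp (\<i> * of_int N * z) *
      (poly (Pp \<omega> j) (of_real t) * exp (poly (Qp \<omega>) (of_real t)))"
  have "(?g has_field_derivative (\<i> * of_int N)^Suc i * exp (\<i> * of_int N * z) *
      (poly (Pp \<omega> j) (of_real t) * exp (poly (Qp \<omega>) (of_real t)))) (at z)" for z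
    by (auto intro!: derivative_eq_intros simp: algebra_simps)
  from vd_of_real[of ?g, OF this]
  show "((\<lambda>y. Dfun N \<omega> i j y t) has_vector_derivative Dfun N \<omega> (Suc i) j x t) (at x)"
    by (simp add: Dfun_def)
next
  fix i j :: nat and x t :: real
  let ?g = "\<lambda>z. (\<i> * of_int N)^i * exp (\<i> * of_int N * of_real x) *
      (poly (Pp \<omega> j) z * exp (poly (Qp \<omega>) z))"
  have "(?g has_field_derivative (\<i> * of_int N)^i * exp (\<i> * of_int N * of_real x) *
      (poly (Pp \<omega> (Suc j)) z * exp (poly (Qp \<omega>) z))) (at z)" for z
    by (auto intro!: derivative_eq_intros simp: algebra_simps)
  from vd_of_real[of ?g, OF this]
  show "((\<lambda>y. Dfun N \<omega> i j x y) has_vector_derivative Dfun N \<omega> i (Suc j) x t) (at t)"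
    by (simp add: Dfun_def)
next
  fix i j :: nat
  show "continuous_on UNIV (\<lambda>p. Dfun N \<omega> i j (fst p) (snd p))"
    unfolding Dfun_def by (intro continuous_intros)
next
  fix i j M :: nat
  obtain K d where K: "K \<ge> 0" "\<And>t::real. norm (poly (Pp \<omega> j) (complex_of_real t)) \<le> K * (1 + \<bar>t\<bar>) ^ d"
    using poly_growth by blast
  show "\<exists>B. \<forall>x t. (1 + \<bar>t\<bar>) ^ M * cmod (Dfun N \<omega> i j x t) \<le> B"
  proof (intro exI[of _ "\<bar>of_int N\<bar>^i * K * exp ((real (M + d) + 1)^2)"] allI)
    fix x t :: real
    have "cmod (Dfun N \<omega> i j x t) = \<bar>of_int N\<bar>^i * norm (poly (Pp \<omega> j) (complex_of_real t)) * exp (- (t^2) / 4)"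
      by (simp add: Dfun_def norm_mult norm_power norm_exp_Qp norm_exp_iN poly_Qp)
    also have "\<dots> \<le> \<bar>of_int N\<bar>^i * (K * (1 + \<bar>t\<bar>) ^ d) * exp (- (t^2) / 4)"
      using K(2)[of t] by (intro mult_right_mono mult_left_mono) auto
    finally have "(1 + \<bar>t\<bar>) ^ M * cmod (Dfun N \<omega> i j x t) \<le>
        (1 + \<bar>t\<bar>) ^ M * (\<bar>of_int N\<bar>^i * (K * (1 + \<bar>t\<bar>) ^ d) * exp (- (t^2) / 4))"
      by (intro mult_left_mono) auto
    also have "\<dots> = \<bar>of_int N\<bar>^i * K * ((1 + \<bar>t\<bar>) ^ (M + d) * exp (- (t^2) / 4))"
      by (simp add: power_add algebra_simps)
    also have "\<dots> \<le> \<bar>of_int N\<bar>^i * K * exp ((real (M + d) + 1)^2)"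
      using gauss_decay[of t "M + d"] K(1) by (intro mult_left_mono) auto
    finally show "(1 + \<bar>t\<bar>) ^ M * cmod (Dfun N \<omega> i j x t) \<le> \<bar>of_int N\<bar>^i * K * exp ((real (M + d) + 1)^2)" .
  qed
qed


lemma infsum_single_pt:
  fixes f :: "int \<Rightarrow> real"
  assumes "\<And>n. n \<noteq> N \<Longrightarrow> f n = 0"
  shows "infsum f UNIV = f N"
proof -
  have "infsum f UNIV = infsum f {N}"
    by (rule infsum_cong_neutral) (use assms in auto)
  then show ?thesis by simp
qed

definition hq :: "real \<Rightarrow> real \<Rightarrow> complex" where
  "hq \<omega> t = exp (poly (Qp \<omega>) (of_real t))"

lemma ufun_alt: "ufun N \<omega> = (\<lambda>x t. exp (\<i> * complex_of_real (real_of_int N * x)) * hq \<omega> t)"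
proof (intro ext)
  fix x t
  have "\<i> * of_int N * complex_of_real x = \<i> * complex_of_real (real_of_int N * x)" by simp
  then show "ufun N \<omega> x t = exp (\<i> * complex_of_real (real_of_int N * x)) * hq \<omega> t"
    unfolding ufun_def hq_def by (simp add: mult.assoc)
qed

lemma FT_hq: "FT (hq \<omega>) \<tau> = FT (hq 0) (\<tau> + \<omega>)"
proof -
  have "hq \<omega> t * exp (- \<i> * complex_of_real (\<tau> * t)) = hq 0 t * exp (- \<i> * complex_of_real ((\<tau> + \<omega>) * t))" for t
  proof -
    have "poly (Qp \<omega>) (of_real t) + (- \<i> * complex_of_real (\<tau> * t)) = poly (Qp 0) (of_real t) + (- \<i> * complex_of_real ((\<tau> + \<omega>) * t))"
      unfolding poly_Qp by (simp add: algebra_simps)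
    then show ?thesis unfolding hq_def exp_add[symmetric] by simp
  qed
  then show ?thesis unfolding FT_def by simp
qed

definition Aconst :: "real \<Rightarrow> real" where
  "Aconst b = integral UNIV (\<lambda>\<sigma>. jbr \<sigma> powr (2 * b) * (cmod (FT (hq 0) \<sigma>))^2)"

lemma jbr_pos: "jbr x > 0" by (simp add: jbr_def add_pos_nonneg)

lemma Xnorm_ufun: "Xnorm k b (ufun N (real_of_int N ^ 2)) = jbr (real_of_int N) powr k * sqrt (4 * pi^2 * Aconst b)"
proof -
  let ?w = "real_of_int N ^ 2"
  have four: "fourier (ufun N ?w) n \<tau> = (if n = N then 2 * pi * FT (hq 0) (\<tau> + ?w) else 0)" for n \<tau>
    unfolding ufun_alt fourier_sep FT_hq[of ?w] ..
  have s: "infsum (\<lambda>n::int. integral UNIV (\<lambda>\<tau>.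
      jbr (real_of_int n) powr (2 * k) * jbr (\<tau> + (real_of_int n)^2) powr (2 * b)
        * (cmod (fourier (ufun N ?w) n \<tau>))^2)) UNIV
     = integral UNIV (\<lambda>\<tau>.
      jbr (real_of_int N) powr (2 * k) * jbr (\<tau> + ?w) powr (2 * b)
        * (cmod (fourier (ufun N ?w) N \<tau>))^2)"
    by (rule infsum_single_pt) (simp add: four)
  have "integral UNIV (\<lambda>\<tau>.
      jbr (real_of_int N) powr (2 * k) * jbr (\<tau> + ?w) powr (2 * b)
        * (cmod (fourier (ufun N ?w) N \<tau>))^2)
      = integral UNIV (\<lambda>\<tau>. (jbr (real_of_int N) powr (2 * k) * (4 * pi^2)) *
           (jbr (\<tau> + ?w) powr (2 * b) * (cmod (FT (hq 0) (\<tau> + ?w)))^2))"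
  proof (rule integral_cong)
    fix \<tau>
    have c: "(cmod (fourier (ufun N ?w) N \<tau>))^2 = 4*pi^2 * (cmod (FT (hq 0) (\<tau> + ?w)))^2"
      by (simp add: four norm_mult power_mult_distrib)
    show "jbr (real_of_int N) powr (2 * k) * jbr (\<tau> + ?w) powr (2 * b)
        * (cmod (fourier (ufun N ?w) N \<tau>))^2 = (jbr (real_of_int N) powr (2 * k) * (4 * pi^2)) *
           (jbr (\<tau> + ?w) powr (2 * b) * (cmod (FT (hq 0) (\<tau> + ?w)))^2)"
      unfolding c by (simp only: mult_ac)
  qed
  also have "\<dots> = (jbr (real_of_int N) powr (2 * k) * (4 * pi^2)) * Aconst b"
  proof -
    have "integral UNIV (\<lambda>\<tau>. jbr (\<tau> + ?w) powr (2 * b) * (cmod (FT (hq 0) (\<tau> + ?w)))^2) = Aconst b"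
      unfolding Aconst_def by (rule integral_shift_UNIV)
    then show ?thesis by (simp only: integral_mult_right)
  qed
  finally have i: "integral UNIV (\<lambda>\<tau>.
      jbr (real_of_int N) powr (2 * k) * jbr (\<tau> + ?w) powr (2 * b)
        * (cmod (fourier (ufun N ?w) N \<tau>))^2) = (jbr (real_of_int N) powr (2 * k) * (4 * pi^2)) * Aconst b" .
  have p2: "jbr (real_of_int N) powr (2 * k) = (jbr (real_of_int N) powr k)^2"
    using powr_power[of "jbr (real_of_int N)" k 2] jbr_pos[of "real_of_int N"] by simp
  have "Xnorm k b (ufun N ?w) = sqrt ((jbr (real_of_int N) powr k)^2 * (4 * pi^2 * Aconst b))"
    unfolding Xnorm_def s i unfolding p2 by (simp only: mult.assoc)
  also have "\<dots> = jbr (real_of_int N) powr k * sqrt (4 * pi^2 * Aconst b)"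
    by (simp only: real_sqrt_mult real_sqrt_abs) (simp add: jbr_def)
  finally show ?thesis .
qed


definition gq :: "real \<Rightarrow> real \<Rightarrow> complex" where
  "gq \<omega> t = exp (- \<i> * complex_of_real (\<omega> * t)) * complex_of_real (exp (- (t^2) / 2))"

lemma prod_ufun:
  "(\<lambda>x t. ufun N (real_of_int N ^ 2) x t * cnj (ufun M (real_of_int M ^ 2) x t)) =
   (\<lambda>x t. exp (\<i> * complex_of_real (real_of_int (N - M) * x)) * gq (real_of_int N ^ 2 - real_of_int M ^ 2) t)"
proof (intro ext)
  fix x t :: real
  let ?a = "\<i> * of_int N * complex_of_real x"
  let ?b = "poly (Qp (real_of_int N ^ 2)) (complex_of_real t)"
  let ?c = "\<i> * of_int M * complex_of_real x"
  let ?d = "poly (Qp (real_of_int M ^ 2)) (complex_of_real t)"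
  have l: "ufun N (real_of_int N ^ 2) x t * cnj (ufun M (real_of_int M ^ 2) x t) = exp (?a + ?b + cnj ?c + cnj ?d)"
    unfolding ufun_def complex_cnj_mult exp_cnj by (simp only: mult.assoc add.assoc exp_add[symmetric])
  have r: "exp (\<i> * complex_of_real (real_of_int (N - M) * x)) * gq (real_of_int N ^ 2 - real_of_int M ^ 2) t
     = exp (\<i> * complex_of_real (real_of_int (N - M) * x) + (- \<i> * complex_of_real ((real_of_int N ^ 2 - real_of_int M ^ 2) * t))
         + complex_of_real (- (t^2) / 2))"
    unfolding gq_def exp_of_real[symmetric] by (simp only: mult.assoc add.assoc exp_add[symmetric])
  have e: "?a + ?b + cnj ?c + cnj ?d = \<i> * complex_of_real (real_of_int (N - M) * x) + (- \<i> * complex_of_real ((real_of_int N ^ 2 - real_of_int M ^ 2) * t))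
         + complex_of_real (- (t^2) / 2)"
    unfolding poly_Qp by (simp add: complex_eq_iff algebra_simps)
  show "ufun N (real_of_int N ^ 2) x t * cnj (ufun M (real_of_int M ^ 2) x t) =
     exp (\<i> * complex_of_real (real_of_int (N - M) * x)) * gq (real_of_int N ^ 2 - real_of_int M ^ 2) t"
    unfolding l r e ..
qed

lemma FT_gq: "FT (gq \<omega>) \<tau> = complex_of_real (sqrt (2*pi) * exp (- ((\<tau> + \<omega>)^2) / 2))"
proof -
  have "gq \<omega> t * exp (- \<i> * complex_of_real (\<tau> * t)) =
     complex_of_real (exp (- (t^2) / 2)) * exp (- \<i> * complex_of_real ((\<tau> + \<omega>) * t))" for t
  proof -
    have "exp (- \<i> * complex_of_real (\<omega> * t)) * exp (- \<i> * complex_of_real (\<tau> * t))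
        = exp (- \<i> * complex_of_real ((\<tau> + \<omega>) * t))"
      by (simp add: exp_add[symmetric] algebra_simps)
    then show ?thesis unfolding gq_def by (simp add: mult_ac)
  qed
  then have "FT (gq \<omega>) \<tau> = integral UNIV (\<lambda>t. complex_of_real (exp (- (t^2) / 2)) * exp (- \<i> * complex_of_real ((\<tau> + \<omega>) * t)))"
    unfolding FT_def by simp
  also have "\<dots> = complex_of_real (sqrt (2*pi) * exp (- ((\<tau> + \<omega>)^2) / 2))"
    by (rule integral_unique[OF gauss_has_integral])
  finally show ?thesis .
qed

definition Bint :: "real \<Rightarrow> real \<Rightarrow> real" where
  "Bint p \<omega> = integral UNIV (\<lambda>\<tau>. jbr \<tau> powr p * exp (- ((\<tau> + \<omega>)^2)))"

lemma HH_prod: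
  "HHnorm \<beta> s (\<lambda>x t. ufun N (real_of_int N ^ 2) x t * cnj (ufun M (real_of_int M ^ 2) x t))
    = sqrt (jbr (real_of_int (N - M)) powr (2 * s) * (8 * pi^3 * Bint (2 * \<beta>) (real_of_int N ^ 2 - real_of_int M ^ 2)))"
proof -
  let ?w = "real_of_int N ^ 2 - real_of_int M ^ 2"
  have four: "fourier (\<lambda>x t. ufun N (real_of_int N ^ 2) x t * cnj (ufun M (real_of_int M ^ 2) x t)) n \<tau>
     = (if n = N - M then 2 * pi * complex_of_real (sqrt (2*pi) * exp (- ((\<tau> + ?w)^2) / 2)) else 0)" for n \<tau>
    unfolding prod_ufun fourier_sep FT_gq ..
  have c: "(cmod (2 * pi * complex_of_real (sqrt (2*pi) * exp (- ((\<tau> + ?w)^2) / 2))))^2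
     = 8 * pi^3 * exp (- ((\<tau> + ?w)^2))" for \<tau>
  proof -
    have "(exp (- ((\<tau> + ?w)^2) / 2))^2 = exp (- ((\<tau> + ?w)^2))"
      by (simp add: power2_eq_square exp_add[symmetric])
    moreover have "pi^2*pi = pi^3" by (simp add: power3_eq_cube power2_eq_square)
    ultimately show ?thesis by (simp add: norm_mult power_mult_distrib power2_eq_square[of "sqrt _"])
  qed
  have cc: "(cmod (fourier (\<lambda>x t. ufun N (real_of_int N ^ 2) x t * cnj (ufun M (real_of_int M ^ 2) x t)) n \<tau>))^2
     = (if n = N - M then 8 * pi^3 * exp (- ((\<tau> + ?w)^2)) else 0)" for n \<tau>
  proof -
    have ifd: "(cmod (if P then X else 0))^2 = (if P then (cmod X)^2 else 0)" for P X by simp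
    show ?thesis unfolding four ifd c ..
  qed
  have "HHnorm \<beta> s (\<lambda>x t. ufun N (real_of_int N ^ 2) x t * cnj (ufun M (real_of_int M ^ 2) x t))
     = sqrt (integral UNIV (\<lambda>\<tau>. jbr (real_of_int (N - M)) powr (2 * s) * jbr \<tau> powr (2 * \<beta>) *
          (8 * pi^3 * exp (- ((\<tau> + ?w)^2)))))"
    unfolding HHnorm_def by (subst infsum_single_pt[where N="N - M"]) (simp_all add: cc)
  also have "integral UNIV (\<lambda>\<tau>. jbr (real_of_int (N - M)) powr (2 * s) * jbr \<tau> powr (2 * \<beta>) *
          (8 * pi^3 * exp (- ((\<tau> + ?w)^2)))) =
       integral UNIV (\<lambda>\<tau>. (jbr (real_of_int (N - M)) powr (2 * s) * (8 * pi^3)) * (jbr \<tau> powr (2 * \<beta>) *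
          exp (- ((\<tau> + ?w)^2))))"
    by (rule integral_cong) (simp only: mult_ac)
  also have "\<dots> = jbr (real_of_int (N - M)) powr (2 * s) * (8 * pi^3 * Bint (2 * \<beta>) ?w)"
    unfolding Bint_def by (simp only: integral_mult_right mult.assoc)
  finally show ?thesis .
qed


lemma Bint_integrable:
  "(\<lambda>\<tau>. jbr \<tau> powr p * exp (- ((\<tau> + \<omega>)^2))) integrable_on UNIV"
proof -
  define m where "m = nat \<lceil>max p 0\<rceil>"
  define K where "K = (1 + \<bar>\<omega>\<bar>) ^ m * exp ((real m + 1)^2) * sqrt (2 * pi)"
  have gi: "(\<lambda>\<tau>. K * normal_density (- \<omega>) 1 \<tau>) integrable_on UNIV"
  proof -
    have "normal_density (- \<omega>) 1 integrable_on UNIV"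
      using integrable_on_lborel[OF integrable_normal_density[where \<mu>="- \<omega>" and \<sigma>=1]] by simp
    then show ?thesis by (rule integrable_on_mult_right)
  qed
  show ?thesis
  proof (rule integrable_on_all_intervals_integrable_bound[OF _ _ gi])
    fix a b :: real
    have "continuous_on (cbox a b) (\<lambda>\<tau>. jbr \<tau> powr p * exp (- ((\<tau> + \<omega>)^2)))"
      unfolding jbr_def by (intro continuous_intros) (auto simp: add_pos_nonneg)
    then show "(\<lambda>x. if x \<in> UNIV then jbr x powr p * exp (- ((x + \<omega>)^2)) else 0) integrable_on cbox a b"
      using integrable_continuous_interval by simp
  next
    fix \<tau> :: real
    let ?s = "\<tau> + \<omega>"
    have j1: "jbr \<tau> \<ge> 1" by (simp add: jbr_def)
    have "jbr \<tau> powr p \<le> jbr \<tau> powr (real m)"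
      using j1 by (intro powr_mono) (auto simp: m_def, linarith)
    also have "\<dots> = jbr \<tau> ^ m" using jbr_pos by (simp add: powr_realpow)
    also have "\<dots> \<le> ((1 + \<bar>\<omega>\<bar>) * (1 + \<bar>?s\<bar>)) ^ m"
    proof (rule power_mono)
      have "\<bar>\<tau>\<bar> \<le> \<bar>?s\<bar> + \<bar>\<omega>\<bar>" by linarith
      then show "jbr \<tau> \<le> (1 + \<bar>\<omega>\<bar>) * (1 + \<bar>?s\<bar>)"
        unfolding jbr_def by (simp add: algebra_simps) (smt (verit) abs_ge_zero mult_nonneg_nonneg)
    qed (use jbr_pos in \<open>auto intro: less_imp_le\<close>)
    finally have a: "jbr \<tau> powr p \<le> (1 + \<bar>\<omega>\<bar>) ^ m * (1 + \<bar>?s\<bar>) ^ m"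
      by (simp add: power_mult_distrib)
    have b: "(1 + \<bar>?s\<bar>) ^ m * exp (- (?s^2)) \<le> exp ((real m + 1)^2) * exp (- (?s^2) / 2)"
    proof -
      have "exp (- (?s^2)) = exp (- (?s^2) / 4) * exp (- (?s^2) * 3 / 4)"
        by (simp add: exp_add[symmetric])
      moreover have "exp (- (?s^2) * 3 / 4) \<le> exp (- (?s^2) / 2)" by simp
      ultimately have "(1 + \<bar>?s\<bar>) ^ m * exp (- (?s^2)) \<le> ((1 + \<bar>?s\<bar>) ^ m * exp (- (?s^2) / 4)) * exp (- (?s^2) / 2)"
        by (simp add: mult_left_mono mult.assoc)
      also have "\<dots> \<le> exp ((real m + 1)^2) * exp (- (?s^2) / 2)"
        by (rule mult_right_mono[OF gauss_decay]) simp
      finally show ?thesis .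
    qed
    have "norm (jbr \<tau> powr p * exp (- (?s^2))) = jbr \<tau> powr p * exp (- (?s^2))" by simp
    also have "\<dots> \<le> (1 + \<bar>\<omega>\<bar>) ^ m * (1 + \<bar>?s\<bar>) ^ m * exp (- (?s^2))"
      using a by (simp add: mult_right_mono)
    also have "\<dots> \<le> (1 + \<bar>\<omega>\<bar>) ^ m * (exp ((real m + 1)^2) * exp (- (?s^2) / 2))"
      using b by (simp add: mult.assoc mult_left_mono)
    also have "\<dots> = K * normal_density (- \<omega>) 1 \<tau>"
      unfolding K_def normal_density_def by simp
    finally show "norm (jbr \<tau> powr p * exp (- ((\<tau> + \<omega>)^2))) \<le> K * normal_density (- \<omega>) 1 \<tau>" .
  qed
qed

lemma Bint_lower:
  "Bint p \<omega> \<ge> 2 * (exp (-1) * min 1 ((2 + \<bar>\<omega>\<bar>) powr p))"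
proof -
  let ?c = "exp (-1) * min 1 ((2 + \<bar>\<omega>\<bar>) powr p)"
  let ?g = "\<lambda>\<tau>. if \<tau> \<in> {-\<omega>-1..-\<omega>+1} then ?c else 0"
  have gh: "(?g has_integral (2 * ?c)) UNIV"
    using has_integral_restrict_UNIV[THEN iffD2, OF has_integral_const_real[of ?c "-\<omega>-1" "-\<omega>+1"]]
    by simp
  have "integral UNIV ?g \<le> Bint p \<omega>"
    unfolding Bint_def
  proof (rule integral_le[OF _ Bint_integrable])
    show "?g integrable_on UNIV" using gh by blast
    fix \<tau> :: real
    show "?g \<tau> \<le> jbr \<tau> powr p * exp (- ((\<tau> + \<omega>)^2))"
    proof (cases "\<tau> \<in> {-\<omega>-1..-\<omega>+1}")
      case False then show ?thesis by auto
    next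
      case True
      then have s1: "\<bar>\<tau> + \<omega>\<bar> \<le> 1" by auto
      then have "(\<tau> + \<omega>)^2 \<le> 1" using abs_le_square_iff[of "\<tau> + \<omega>" 1] by simp
      then have e: "exp (-1) \<le> exp (- ((\<tau> + \<omega>)^2))" by simp
      have j: "jbr \<tau> \<le> 2 + \<bar>\<omega>\<bar>" using s1 unfolding jbr_def by linarith
      have w: "min 1 ((2 + \<bar>\<omega>\<bar>) powr p) \<le> jbr \<tau> powr p"
      proof (cases "p \<ge> 0")
        case True
        have "1 \<le> jbr \<tau> powr p" using True by (simp add: jbr_def ge_one_powr_ge_zero)
        then show ?thesis by simp
      next
        case False
        have "(2 + \<bar>\<omega>\<bar>) powr p \<le> jbr \<tau> powr p"
          using False j jbr_pos by (intro powr_mono2') auto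
        then show ?thesis by simp
      qed
      have "?c \<le> jbr \<tau> powr p * exp (- ((\<tau> + \<omega>)^2))"
        using mult_mono[OF w e] by (simp add: mult.commute)
      then show ?thesis using True by simp
    qed
  qed
  then show ?thesis using integral_unique[OF gh] by simp
qed


lemma growth_contra:
  fixes a b c D :: real
  assumes c: "c > 0" and h: "\<And>N::nat. c * (1 + real N) powr a \<le> D * (1 + real N) powr b"
  shows "a \<le> b"
proof (rule ccontr)
  assume "\<not> a \<le> b"
  then have e: "a - b > 0" by simp
  have "filterlim (\<lambda>N::nat. (1 + real N) powr (a - b)) at_top sequentially"
    using e by real_asymp
  then have "eventually (\<lambda>N::nat. (1 + real N) powr (a - b) \<ge> D / c + 1) sequentially"
    by (simp add: filterlim_at_top)
  then obtain N :: nat where N: "(1 + real N) powr (a - b) \<ge> D / c + 1"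
    by (auto simp: eventually_sequentially)
  have pb: "(1 + real N) powr b > 0" by simp
  have "c * (1 + real N) powr a = c * (1 + real N) powr (a - b) * (1 + real N) powr b"
    by (simp add: powr_add[symmetric])
  also have "\<dots> \<ge> c * (D / c + 1) * (1 + real N) powr b"
    using N c pb by (intro mult_right_mono mult_left_mono) auto
  finally have "c * (D / c + 1) * (1 + real N) powr b \<le> D * (1 + real N) powr b"
    using h[of N] by linarith
  then have "c * (D / c + 1) \<le> D" using pb by simp
  then show False using c by (simp add: field_simps) (smt (verit) mult_pos_pos)
qed

lemma powr_between:
  fixes x y s :: real
  assumes "0 < x" "x \<le> y" "y \<le> 2 * x"
  shows "min 1 (2 powr s) * x powr s \<le> y powr s"
proof (cases "s \<ge> 0")
  case True
  have "x powr s \<le> y powr s" using assms True by (intro powr_mono2) auto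
  moreover have "min 1 (2 powr s) * x powr s \<le> x powr s" by (simp add: mult_left_le_one_le)
  ultimately show ?thesis by linarith
next
  case False
  have "(2 * x) powr s \<le> y powr s" using assms False by (intro powr_mono2') auto
  moreover have "(2 * x) powr s = 2 powr s * x powr s" using assms by (simp add: powr_mult)
  moreover have "min 1 (2 powr s) * x powr s \<le> 2 powr s * x powr s" by (simp add: mult_right_mono)
  ultimately show ?thesis by linarith
qed


lemma minclaim:
  fixes x \<beta> :: real
  assumes "x \<ge> 0"
  shows "2 powr (2 * min \<beta> 0) * (1 + x) powr (4 * min \<beta> 0) \<le> min 1 ((2 + \<bar>x^2\<bar>) powr (2 * \<beta>))"
proof (cases "\<beta> \<ge> 0")
  case True
  have "1 \<le> (2 + \<bar>x^2\<bar>) powr (2 * \<beta>)" using True by (intro ge_one_powr_ge_zero) auto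
  then show ?thesis using True by simp
next
  case False
  then have mb: "min \<beta> 0 = \<beta>" by simp
  have "(1 + x) powr (4 * \<beta>) = ((1 + x) powr 2) powr (2 * \<beta>)" by (simp add: powr_powr)
  also have "(1 + x) powr 2 = (1 + x)^2" using assms by (simp add: powr_numeral)
  finally have "2 powr (2 * \<beta>) * (1 + x) powr (4 * \<beta>) = (2 * (1 + x)^2) powr (2 * \<beta>)"
    using assms by (simp add: powr_mult)
  also have "\<dots> \<le> (2 + \<bar>x^2\<bar>) powr (2 * \<beta>)"
  proof (rule powr_mono2')
    show "2 * \<beta> \<le> 0" using False by simp
    show "0 < 2 + \<bar>x^2\<bar>" by (simp add: add_pos_nonneg)
    show "2 + \<bar>x^2\<bar> \<le> 2 * (1 + x)^2" using assms by (simp add: power2_eq_square algebra_simps)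
  qed
  finally have a: "2 powr (2 * \<beta>) * (1 + x) powr (4 * \<beta>) \<le> (2 + \<bar>x^2\<bar>) powr (2 * \<beta>)" .
  have "(2 + \<bar>x^2\<bar>) powr (2 * \<beta>) \<le> 1"
    using False powr_mono2'[of "2 * \<beta>" 1 "2 + \<bar>x^2\<bar>"] by simp
  then show ?thesis using a mb by simp
qed


theorem proposition4p4:
  fixes k s b1 b2 \<eta> :: real
  assumes "\<eta> > 0"
    and "\<exists>C. \<forall>u1 u2. test_fun u1 \<longrightarrow> test_fun u2 \<longrightarrow>
           HHnorm (-1/2 + \<eta>) s (\<lambda>x t. u1 x t * cnj (u2 x t))
             \<le> C * Xnorm k b1 u1 * Xnorm k b2 u2"
  shows "s \<le> 2 * k \<and> s < k + 1"
proof -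
  obtain C where hC: "\<And>u1 u2. test_fun u1 \<Longrightarrow> test_fun u2 \<Longrightarrow>
           HHnorm (-1/2 + \<eta>) s (\<lambda>x t. u1 x t * cnj (u2 x t))
             \<le> C * Xnorm k b1 u1 * Xnorm k b2 u2"
    using assms(2) by blast
  define \<beta> where "\<beta> = -1/2 + \<eta>"
  define a1 where "a1 = sqrt (4 * pi^2 * Aconst b1)"
  define a2 where "a2 = sqrt (4 * pi^2 * Aconst b2)"
  define L where "L \<omega> = 2 * (exp (-1) * min 1 ((2 + \<bar>\<omega>\<bar>) powr (2 * \<beta>)))" for \<omega> :: real
  have key: "jbr (real_of_int (N - M)) powr s * sqrt (8 * pi^3 * L (real_of_int N ^ 2 - real_of_int M ^ 2))
      \<le> C * (jbr (real_of_int N) powr k * a1) * (jbr (real_of_int M) powr k * a2)" for N M :: int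
  proof -
    let ?w = "real_of_int N ^ 2 - real_of_int M ^ 2"
    let ?j = "jbr (real_of_int (N - M)) powr s"
    have h: "HHnorm \<beta> s (\<lambda>x t. ufun N (real_of_int N ^ 2) x t * cnj (ufun M (real_of_int M ^ 2) x t))
       \<le> C * (jbr (real_of_int N) powr k * a1) * (jbr (real_of_int M) powr k * a2)"
      using hC[OF test_fun_ufun test_fun_ufun, of N "real_of_int N ^ 2" M "real_of_int M ^ 2"]
      unfolding Xnorm_ufun \<beta>_def a1_def a2_def by simp
    have p2: "jbr (real_of_int (N - M)) powr (2 * s) = ?j^2"
      using powr_power[of "jbr (real_of_int (N - M))" s 2] jbr_pos[of "real_of_int (N - M)"] by simp
    have "L ?w \<le> Bint (2 * \<beta>) ?w" unfolding L_def by (rule Bint_lower)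
    then have "sqrt (?j^2 * (8 * pi^3 * L ?w)) \<le> sqrt (?j^2 * (8 * pi^3 * Bint (2 * \<beta>) ?w))"
      by (intro real_sqrt_le_mono mult_left_mono) auto
    also have "\<dots> = HHnorm \<beta> s (\<lambda>x t. ufun N (real_of_int N ^ 2) x t * cnj (ufun M (real_of_int M ^ 2) x t))"
      unfolding HH_prod p2 ..
    also have "sqrt (?j^2 * (8 * pi^3 * L ?w)) = ?j * sqrt (8 * pi^3 * L ?w)"
      by (simp add: real_sqrt_mult)
    finally show ?thesis using h by linarith
  qed
  have Lpos: "L \<omega> > 0" for \<omega> unfolding L_def by simp
  have part1: "s \<le> 2 * k"
  proof (rule growth_contra[where c = "min 1 (2 powr s) * sqrt (8 * pi^3 * L 0)" and D = "C * a1 * a2"])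
    show "0 < min 1 (2 powr s) * sqrt (8 * pi^3 * L 0)" using Lpos[of 0] by simp
    fix N :: nat
    have e1: "jbr (real_of_int (int N - - int N)) = 1 + 2 * real N" by (simp add: jbr_def)
    have e2: "jbr (real_of_int (- int N)) = 1 + real N" "jbr (real_of_int (int N)) = 1 + real N" by (simp_all add: jbr_def)
    have e3: "real_of_int (int N) ^ 2 - real_of_int (- int N) ^ 2 = 0" by simp
    have k1: "(1 + 2 * real N) powr s * sqrt (8 * pi^3 * L 0)
        \<le> C * ((1 + real N) powr k * a1) * ((1 + real N) powr k * a2)"
      using key[of "int N" "- int N"] unfolding e1 e2 e3 .
    have r: "C * ((1 + real N) powr k * a1) * ((1 + real N) powr k * a2) = C * a1 * a2 * (1 + real N) powr (2 * k)"
      by (simp add: powr_add[symmetric] mult_2 mult_ac)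
    have "min 1 (2 powr s) * (1 + real N) powr s \<le> (1 + 2 * real N) powr s"
      by (rule powr_between) auto
    then have m: "min 1 (2 powr s) * (1 + real N) powr s * sqrt (8 * pi^3 * L 0) \<le> (1 + 2 * real N) powr s * sqrt (8 * pi^3 * L 0)"
      by (rule mult_right_mono) (use Lpos[of 0] in simp)
    have "min 1 (2 powr s) * sqrt (8 * pi^3 * L 0) * (1 + real N) powr s = min 1 (2 powr s) * (1 + real N) powr s * sqrt (8 * pi^3 * L 0)"
      by (simp only: mult_ac)
    then show "min 1 (2 powr s) * sqrt (8 * pi^3 * L 0) * (1 + real N) powr s \<le> C * a1 * a2 * (1 + real N) powr (2 * k)"
      using k1 r m by linarith
  qed
  have part2: "s < k + 1"
  proof -
    define \<beta>' where "\<beta>' = min \<beta> 0"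
    define c where "c = sqrt (8 * pi^3 * (2 * (exp (-1) * 2 powr (2 * \<beta>'))))"
    have "s + 2 * \<beta>' \<le> k"
    proof (rule growth_contra[where c = c and D = "C * a1 * a2"])
      show "0 < c" unfolding c_def by simp
      fix N :: nat
      have e1: "jbr (real_of_int (int N - 0)) = 1 + real N" "jbr (real_of_int (int N)) = 1 + real N"
        "jbr (real_of_int 0) = 1" by (simp_all add: jbr_def)
      have e3: "real_of_int (int N) ^ 2 - real_of_int 0 ^ 2 = real N ^ 2" by simp
      have k1: "(1 + real N) powr s * sqrt (8 * pi^3 * L (real N ^ 2))
          \<le> C * ((1 + real N) powr k * a1) * (1 powr k * a2)"
        using key[of "int N" 0] unfolding e1 e3 .
      have mc: "2 powr (2 * \<beta>') * (1 + real N) powr (4 * \<beta>') \<le> min 1 ((2 + \<bar>real N ^ 2\<bar>) powr (2 * \<beta>))"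
        unfolding \<beta>'_def by (rule minclaim) simp
      have "8 * pi^3 * (2 * (exp (-1) * 2 powr (2 * \<beta>'))) * ((1 + real N) powr (2 * \<beta>'))^2
          = 8 * pi^3 * (2 * (exp (-1) * (2 powr (2 * \<beta>') * (1 + real N) powr (4 * \<beta>'))))"
        using powr_power[of "1 + real N" "2 * \<beta>'" 2] by (simp add: mult_ac)
      also have "\<dots> \<le> 8 * pi^3 * L (real N ^ 2)"
        unfolding L_def using mc by (intro mult_left_mono) auto
      finally have "sqrt (8 * pi^3 * (2 * (exp (-1) * 2 powr (2 * \<beta>'))) * ((1 + real N) powr (2 * \<beta>'))^2)
          \<le> sqrt (8 * pi^3 * L (real N ^ 2))" by (rule real_sqrt_le_mono)
      then have sq: "c * (1 + real N) powr (2 * \<beta>') \<le> sqrt (8 * pi^3 * L (real N ^ 2))"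
        unfolding c_def by (simp add: real_sqrt_mult)
      have "c * (1 + real N) powr (s + 2 * \<beta>') = (1 + real N) powr s * (c * (1 + real N) powr (2 * \<beta>'))"
        by (simp add: powr_add mult_ac)
      also have "\<dots> \<le> (1 + real N) powr s * sqrt (8 * pi^3 * L (real N ^ 2))"
        using sq by (intro mult_left_mono) auto
      also have "\<dots> \<le> C * a1 * a2 * (1 + real N) powr k"
        using k1 by (simp add: mult_ac)
      finally show "c * (1 + real N) powr (s + 2 * \<beta>') \<le> C * a1 * a2 * (1 + real N) powr k" .
    qed
    moreover have "2 * \<beta>' > -1" unfolding \<beta>'_def \<beta>_def using assms(1) by (simp add: min_def)
    ultimately show ?thesis by linarith
  qed
  show ?thesis using part1 part2 by simp
qed

end
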